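(* For $a,b>0$ let $\mathrm{Herm}(a,b)$ denote the distribution of $U+2V$, where $U\sim\mathrm{Poisson}(a)$ and $V\sim\mathrm{Poisson}(b)$ are independent. If $0<a\le c$ and $0<b\le d$, then $\mathrm{Herm}(a,b)\le_{wd}\mathrm{Herm}(c,d)$.
   Context: For a real random variable $X$, its Lévy concentration function is $Q_X(\varepsilon)=\sup_{x_0\in\mathbb{R}}\Pr\{X\in[x_0,x_0+\varepsilon]\}$, $\varepsilon>0$. For random variables (or distributions) $X,Y$, write $X\le_{wd}Y$ if $Q_X(\varepsilon)\ge Q_Y(\varepsilon)$ for all $\varepsilon>0$. *)

theory Defs
  imports "HOL-Probability.Probability"
begin

definition levy_conc :: "real measure \<Rightarrow> real \<Rightarrow> real" where
  "levy_conc M \<epsilon> = (SUP x0 \<in> UNIV. measure M {x0..x0 + \<epsilon>})"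

definition wd_le :: "real measure \<Rightarrow> real measure \<Rightarrow> bool" where
  "wd_le M N \<longleftrightarrow> (\<forall>\<epsilon>>0. levy_conc M \<epsilon> \<ge> levy_conc N \<epsilon>)"

definition herm :: "real \<Rightarrow> real \<Rightarrow> real pmf" where
  "herm a b = map_pmf (\<lambda>(u, v). real u + 2 * real v)
                 (pair_pmf (poisson_pmf a) (poisson_pmf b))"

end

theory Submission
  imports Defs
begin



lemma levy_bdd: "bdd_above ((\<lambda>x0. measure (measure_pmf M) {x0..x0 + e}) ` UNIV)"
  by (rule bdd_aboveI[where M=1]) (auto simp: measure_pmf.prob_le_1)

lemma levy_upper: "measure (measure_pmf M) {x0..x0 + e} \<le> levy_conc (measure_pmf M) e"
  unfolding levy_conc_def by (rule cSUP_upper[OF _ levy_bdd]) auto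

lemma levy_nonneg: "0 \<le> levy_conc (measure_pmf M) e"
  using levy_upper[of M 0 e] by (meson order_trans measure_nonneg)

lemma levy_shift:
  "levy_conc (measure_pmf (bind_pmf q (\<lambda>y. map_pmf (\<lambda>x. x + t y) M))) e \<le> levy_conc (measure_pmf M) e"
proof -
  have "measure (measure_pmf (bind_pmf q (\<lambda>y. map_pmf (\<lambda>x. x + t y) M))) {x0..x0 + e}
        \<le> levy_conc (measure_pmf M) e" for x0
  proof -
    have "emeasure (measure_pmf (bind_pmf q (\<lambda>y. map_pmf (\<lambda>x. x + t y) M))) {x0..x0 + e}
       = (\<integral>\<^sup>+y. emeasure (measure_pmf M) {x0 - t y..x0 - t y + e} \<partial>q)"
      by (auto intro!: nn_integral_cong arg_cong2[where f=emeasure] simp: emeasure_bind_pmf)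
    also have "\<dots> \<le> (\<integral>\<^sup>+y. ennreal (levy_conc (measure_pmf M) e) \<partial>q)"
      by (intro nn_integral_mono) (simp add: measure_pmf.emeasure_eq_measure levy_upper ennreal_leI)
    also have "\<dots> = ennreal (levy_conc (measure_pmf M) e)"
      by (simp add: measure_pmf.emeasure_space_1)
    finally show ?thesis
      by (simp add: measure_pmf.emeasure_eq_measure levy_nonneg)
  qed
  then show ?thesis
    unfolding levy_conc_def[of "measure_pmf (bind_pmf _ _)"] by (intro cSUP_least) auto
qed

lemma poisson_add:
  assumes "0 < a" "0 < r"
  shows "poisson_pmf (a + r) = bind_pmf (poisson_pmf a) (\<lambda>u. map_pmf (\<lambda>w. u + w) (poisson_pmf r))"
proof (rule pmf_eqI)
  fix k :: nat
  have inner: "pmf (map_pmf (\<lambda>w. u + w) (poisson_pmf r)) k =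
      (if u \<le> k then r ^ (k - u) / fact (k - u) * exp (-r) else 0)" for u
  proof -
    have "(\<lambda>w. u + w) -` {k} = (if u \<le> k then {k - u} else {})" by auto
    then show ?thesis using assms by (simp add: pmf_map measure_pmf_single)
  qed
  have "pmf (bind_pmf (poisson_pmf a) (\<lambda>u. map_pmf (\<lambda>w. u + w) (poisson_pmf r))) k
      = (\<Sum>u\<in>{..k}. (if u \<le> k then r ^ (k - u) / fact (k - u) * exp (-r) else 0) * pmf (poisson_pmf a) u)"
    unfolding pmf_bind inner by (rule integral_measure_pmf_real) (auto split: if_splits)
  also have "\<dots> = (\<Sum>u\<in>{..k}. (r ^ (k - u) / fact (k - u) * exp (-r)) * (a ^ u / fact u * exp (-a)))"
    using assms by (intro sum.cong) auto
  also have "\<dots> = exp (-(a + r)) / fact k * (\<Sum>u\<in>{..k}. of_nat (k choose u) * a ^ u * r ^ (k - u))"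
    unfolding sum_distrib_left
  proof (intro sum.cong refl)
    fix u assume "u \<in> {..k}"
    then have "real (k choose u) = fact k / (fact u * fact (k - u))" by (simp add: binomial_fact)
    then show "r ^ (k - u) / fact (k - u) * exp (-r) * (a ^ u / fact u * exp (-a)) =
      exp (-(a + r)) / fact k * (of_nat (k choose u) * a ^ u * r ^ (k - u))"
    proof -
      have e: "exp (-(a + r)) = exp (-a) * exp (-r)" by (simp add: exp_add[symmetric])
      show ?thesis unfolding e \<open>real (k choose u) = _\<close> by (simp add: field_simps)
    qed
  qed
  also have "\<dots> = (a + r) ^ k / fact k * exp (-(a + r))"
    by (simp add: binomial_ring)
  finally show "pmf (poisson_pmf (a + r)) k = pmf (bind_pmf (poisson_pmf a) (\<lambda>u. map_pmf (\<lambda>w. u + w) (poisson_pmf r))) k"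
    using assms by simp
qed

lemma herm_a:
  assumes "0 < a" "a < c"
  shows "herm c b = bind_pmf (poisson_pmf (c - a)) (\<lambda>w. map_pmf (\<lambda>x. x + real w) (herm a b))"
proof -
  have "poisson_pmf c = bind_pmf (poisson_pmf a) (\<lambda>u. map_pmf (\<lambda>w. u + w) (poisson_pmf (c - a)))"
    using poisson_add[of a "c - a"] assms by simp
  then show ?thesis
    unfolding herm_def
    apply (simp add: pair_pmf_def map_pmf_def bind_assoc_pmf bind_return_pmf)
    apply (rule trans[OF bind_commute_pmf])
    apply (simp add: algebra_simps)
    done
qed

lemma herm_b:
  assumes "0 < b" "b < d"
  shows "herm c d = bind_pmf (poisson_pmf (d - b)) (\<lambda>w. map_pmf (\<lambda>x. x + 2 * real w) (herm c b))"
proof -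
  have "poisson_pmf d = bind_pmf (poisson_pmf b) (\<lambda>u. map_pmf (\<lambda>w. u + w) (poisson_pmf (d - b)))"
    using poisson_add[of b "d - b"] assms by simp
  then show ?thesis
    unfolding herm_def
    apply (simp add: pair_pmf_def map_pmf_def bind_assoc_pmf bind_return_pmf)
    apply (subst bind_commute_pmf[of "poisson_pmf b" "poisson_pmf (d - b)"])
    apply (rule trans[OF bind_commute_pmf])
    apply (simp add: algebra_simps)
    done
qed

lemma wd_le_trans: "wd_le A B \<Longrightarrow> wd_le B C \<Longrightarrow> wd_le A C"
  unfolding wd_le_def by (meson order_trans)

theorem mainTheorem11:
  fixes a b c d :: real
  assumes "0 < a" "a \<le> c" "0 < b" "b \<le> d"
  shows "wd_le (measure_pmf (herm a b)) (measure_pmf (herm c d))"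
proof -
  have 1: "wd_le (measure_pmf (herm a b)) (measure_pmf (herm c b))"
  proof (cases "a = c")
    case False
    then have "a < c" using assms by simp
    then show ?thesis unfolding wd_le_def herm_a[OF assms(1) \<open>a < c\<close>]
      by (simp add: levy_shift)
  qed (simp add: wd_le_def)
  have 2: "wd_le (measure_pmf (herm c b)) (measure_pmf (herm c d))"
  proof (cases "b = d")
    case False
    then have "b < d" using assms by simp
    then show ?thesis unfolding wd_le_def herm_b[OF assms(3) \<open>b < d\<close>]
      by (simp add: levy_shift)
  qed (simp add: wd_le_def)
  show ?thesis using 1 2 by (rule wd_le_trans)
qed

end
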